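(* Let $A$ be a finite alphabet, let $\sigma : A^\star \to A^\star$ be a morphism and let $w\in A^\star$ be such that for every $a\in A$ there exists $m\in\mathbb{N}$ such that the letter $a$ occurs in $\sigma^m(w)$. Then $$|\sigma^n(w)| \asymp \sum_{a\in A} |\sigma^n(a)|$$ as $n\to\infty$.
   Context: $A^\star$ is the free monoid of finite words over $A$; a morphism satisfies $\sigma(uv)=\sigma(u)\sigma(v)$; $\sigma^n$ is the $n$-th iterate; $|u|$ is the length of $u$. For $f,g:\mathbb{N}\to\mathbb{C}$, $f(n) \preceq g(n)$ means there is a real $\lambda>0$ such that the set $\{n\in\mathbb{N} : |f(n)| > \lambda |g(n)|\}$ is finite, and $f(n)\asymp g(n)$ means both $f(n)\preceq g(n)$ and $g(n)\preceq f(n)$. *)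

theory Defs
  imports Complex_Main
begin

definition morph :: "('a \<Rightarrow> 'a list) \<Rightarrow> 'a list \<Rightarrow> 'a list" where
  "morph s u = concat (map s u)"

definition bigO_le :: "(nat \<Rightarrow> complex) \<Rightarrow> (nat \<Rightarrow> complex) \<Rightarrow> bool" where
  "bigO_le f g \<longleftrightarrow> (\<exists>c::real. c > 0 \<and> finite {n. cmod (f n) > c * cmod (g n)})"

definition asymp_eq :: "(nat \<Rightarrow> complex) \<Rightarrow> (nat \<Rightarrow> complex) \<Rightarrow> bool" where
  "asymp_eq f g \<longleftrightarrow> bigO_le f g \<and> bigO_le g f"

end

theory Submission
  imports Defs
begin

lemma morph_append: "morph s (u @ v) = morph s u @ morph s v"
  by (simp add: morph_def)

lemma iter_append: fixes s :: "'a \<Rightarrow> 'a list" and n :: nat shows "(morph s ^^ n) (u @ v) = (morph s ^^ n) u @ (morph s ^^ n) v"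
  by (induction n) (simp_all add: morph_append)

lemma iter_set:
  assumes "\<And>a. a \<in> A \<Longrightarrow> set (s a) \<subseteq> A" "set u \<subseteq> A"
  shows "set ((morph s ^^ n) u) \<subseteq> A"
  using assms(2) by (induction n) (auto simp: morph_def dest!: assms(1))

lemma iter_len_list:
  "length ((morph s ^^ n) u) = (\<Sum>x\<leftarrow>u. length ((morph s ^^ n) [x]))"
proof (induction u)
  case Nil
  have "(morph s ^^ n) [] = []" by (induction n) (simp_all add: morph_def)
  then show ?case by simp
next
  case (Cons x u)
  have "(morph s ^^ n) (x # u) = (morph s ^^ n) [x] @ (morph s ^^ n) u"
    using iter_append[where s=s and n=n and u="[x]" and v=u] by simp
  then show ?case using Cons by simp
qed

lemma iter_len_mem:
  assumes "a \<in> set u"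
  shows "length ((morph s ^^ n) [a]) \<le> length ((morph s ^^ n) u)"
proof -
  obtain xs ys where "u = xs @ a # ys" using split_list[OF assms] by blast
  then have "(morph s ^^ n) u = (morph s ^^ n) xs @ (morph s ^^ n) [a] @ (morph s ^^ n) ys"
    using iter_append[where s=s and n=n and u=xs and v="a # ys"] iter_append[where s=s and n=n and u="[a]" and v=ys] by simp
  then show ?thesis by simp
qed

lemma len_morph_le:
  assumes "\<And>a. a \<in> set u \<Longrightarrow> length (s a) \<le> K"
  shows "length (morph s u) \<le> K * length u"
  using assms by (induction u) (fastforce simp: morph_def)+

theorem lemma2:
  fixes A :: "'a set" and \<sigma> :: "'a \<Rightarrow> 'a list" and w :: "'a list"
  assumes "finite A"
    and "\<And>a. a \<in> A \<Longrightarrow> set (\<sigma> a) \<subseteq> A"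
    and "set w \<subseteq> A"
    and "\<And>a. a \<in> A \<Longrightarrow> \<exists>m::nat. a \<in> set ((morph \<sigma> ^^ m) w)"
  shows "asymp_eq (\<lambda>n. of_nat (length ((morph \<sigma> ^^ n) w)))
                  (\<lambda>n. of_nat (\<Sum>a\<in>A. length ((morph \<sigma> ^^ n) [a])))"
proof -
  define L where "L n = length ((morph \<sigma> ^^ n) w)" for n
  define S where "S n = (\<Sum>a\<in>A. length ((morph \<sigma> ^^ n) [a]))" for n
  have setA: "set ((morph \<sigma> ^^ n) w) \<subseteq> A" for n
    using iter_set[OF assms(2) assms(3)] .
  have d1: "L n \<le> length w * S n" for n
  proof -
    have "L n = (\<Sum>x\<leftarrow>w. length ((morph \<sigma> ^^ n) [x]))"
      unfolding L_def by (rule iter_len_list)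
    also have "\<dots> \<le> (\<Sum>x\<leftarrow>w. S n)"
    proof (rule sum_list_mono)
      fix x assume "x \<in> set w"
      then have "x \<in> A" using assms(3) by auto
      then show "length ((morph \<sigma> ^^ n) [x]) \<le> S n"
        unfolding S_def using assms(1)
        by (intro member_le_sum) auto
    qed
    also have "\<dots> = length w * S n" by (simp add: sum_list_triv)
    finally show ?thesis .
  qed
  define K where "K = Suc (\<Sum>a\<in>A. length (\<sigma> a))"
  have K1: "K \<ge> 1" unfolding K_def by simp
  have Kstep: "L (Suc n) \<le> K * L n" for n
  proof -
    have "L (Suc n) = length (morph \<sigma> ((morph \<sigma> ^^ n) w))" by (simp add: L_def)
    also have "\<dots> \<le> K * L n" unfolding L_def
    proof (rule len_morph_le)
      fix a assume "a \<in> set ((morph \<sigma> ^^ n) w)"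
      then have "a \<in> A" using setA by auto
      then have "length (\<sigma> a) \<le> (\<Sum>a\<in>A. length (\<sigma> a))"
        using assms(1) by (intro member_le_sum) auto
      then show "length (\<sigma> a) \<le> K" unfolding K_def by simp
    qed
    finally show ?thesis .
  qed
  have Kpow: "L (n + m) \<le> K ^ m * L n" for n m
  proof (induction m)
    case 0 then show ?case by simp
  next
    case (Suc m)
    have "L (n + Suc m) \<le> K * L (n + m)" using Kstep[of "n+m"] by simp
    also have "\<dots> \<le> K * (K ^ m * L n)" using Suc by simp
    finally show ?case by (simp add: mult.assoc)
  qed
  define mm where "mm a = (SOME m. a \<in> set ((morph \<sigma> ^^ m) w))" for a
  have mm: "a \<in> set ((morph \<sigma> ^^ mm a) w)" if "a \<in> A" for a
    unfolding mm_def using someI_ex[OF assms(4)[OF that]] .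
  define C where "C = (\<Sum>a\<in>A. K ^ mm a)"
  have d2: "S n \<le> C * L n" for n
  proof -
    have "S n \<le> (\<Sum>a\<in>A. K ^ mm a * L n)" unfolding S_def
    proof (rule sum_mono)
      fix a assume a: "a \<in> A"
      have "length ((morph \<sigma> ^^ n) [a]) \<le> length ((morph \<sigma> ^^ n) ((morph \<sigma> ^^ mm a) w))"
        by (rule iter_len_mem[OF mm[OF a]])
      also have "\<dots> = L (n + mm a)" by (simp add: L_def funpow_add)
      also have "\<dots> \<le> K ^ mm a * L n" by (rule Kpow)
      finally show "length ((morph \<sigma> ^^ n) [a]) \<le> K ^ mm a * L n" .
    qed
    also have "\<dots> = C * L n" by (simp add: C_def sum_distrib_right)
    finally show ?thesis .
  qed
  have b1: "bigO_le (\<lambda>n. of_nat (L n)) (\<lambda>n. of_nat (S n))"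
    unfolding bigO_le_def
  proof (intro exI conjI)
    show "(0::real) < real (Suc (length w))" by simp
    have "{n. cmod (of_nat (L n) :: complex) > real (Suc (length w)) * cmod (of_nat (S n) :: complex)} = {}"
    proof -
      { fix n
        have "real (L n) \<le> real (length w) * real (S n)" using d1[of n]
          by (metis of_nat_le_iff of_nat_mult)
        also have "\<dots> \<le> real (Suc (length w)) * real (S n)"
          by (intro mult_right_mono) auto
        finally have "\<not> real (Suc (length w)) * real (S n) < real (L n)" by simp }
      then show ?thesis by (simp del: of_nat_Suc)
    qed
    then show "finite {n. cmod (of_nat (L n) :: complex) > real (Suc (length w)) * cmod (of_nat (S n) :: complex)}"
      by simp
  qed
  have b2: "bigO_le (\<lambda>n. of_nat (S n)) (\<lambda>n. of_nat (L n))"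
    unfolding bigO_le_def
  proof (intro exI conjI)
    show "(0::real) < real (Suc C)" by simp
    have "{n. cmod (of_nat (S n) :: complex) > real (Suc C) * cmod (of_nat (L n) :: complex)} = {}"
    proof -
      { fix n
        have "real (S n) \<le> real C * real (L n)" using d2[of n]
          by (metis of_nat_le_iff of_nat_mult)
        also have "\<dots> \<le> real (Suc C) * real (L n)"
          by (intro mult_right_mono) auto
        finally have "\<not> real (Suc C) * real (L n) < real (S n)" by simp }
      then show ?thesis by (simp del: of_nat_Suc)
    qed
    then show "finite {n. cmod (of_nat (S n) :: complex) > real (Suc C) * cmod (of_nat (L n) :: complex)}"
      by simp
  qed
  show ?thesis using b1 b2 unfolding asymp_eq_def L_def S_def by simp
qed

end
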